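(* Let $E$ be a real affine space of dimension $n\ge1$ with a system of coordinates $\mathcal L=(\ell_1,\dots,\ell_n)$. Let $(\mu^p)$ be a sequence in $\mathcal M(E)$ converging narrowly to $\mu\in\mathcal M(E)$. If all the measures $\mu^p$ have a common center $x$ with respect to $\mathcal L$, then $x$ is also a center of $\mu$ with respect to $\mathcal L$.
   Context: $\vec E$ is the vector space of $E$. A partition of $E$ is a collection of subsets covering $E$ whose distinct members have disjoint interiors. Yao-Yao partitions and their centers are defined by induction on dimension: if $E=\{x\}$, the Yao-Yao partition is $\{\{x\}\}$, with center $x$; if $\dim E=n\ge1$, $\mathcal P$ is a Yao-Yao partition of $E$ with center $x$ if there exist an affine hyperplane $F$, a vector $v\in\vec E\setminus\vec F$ and two Yao-Yao partitions $\mathcal P_1,\mathcal P_{-1}$ of $F$ with the same center $x$ such that $\mathcal P=\{A+\mathbb R_-v: A\in\mathcal P_{-1}\}\cup\{A+\mathbb R_+v: A\in\mathcal P_1\}$. A system of coordinates is a family $(\ell_1,\dots,\ell_n)$ of affine forms such that $x\mapsto(\ell_i(x))_i$ is a bijection $E\to\mathbb R^n$; write $x_i=\ell_i(x)$. Such a partition, given by $F,v,x,\mathcal P_1,\mathcal P_{-1}$, is adapted to $(\ell_1,\dots,\ell_n)$ if $F=\{z: z_1=x_1\}$ and $\mathcal P_1,\mathcal P_{-1}$ are adapted to $(\ell_2|_F,\dots,\ell_n|_F)$ (in dimension $0$ every Yao-Yao partition is adapted). $\mathcal M(E)$ is the set of finite non-negative Borel measures on $E$ vanishing on every affine hyperplane.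 A Yao-Yao equipartition for $\mu$ is a Yao-Yao partition $\mathcal P$ with $\mu(A)=2^{-n}\mu(E)$ for all $A\in\mathcal P$. A center of $\mu$ with respect to $\mathcal L$ is the center of a Yao-Yao equipartition for $\mu$ adapted to $\mathcal L$. A sequence $(\mu^p)$ converges narrowly to $\mu$ if $\int\phi\,d\mu^p\to\int\phi\,d\mu$ for every bounded continuous function $\phi$ on $E$. *)

theory Defs
  imports "HOL-Probability.Probability"
begin

text \<open>The ambient real affine space E is modelled by a Euclidean space type 'a
  (viewed as an affine space); its vector space is 'a itself.\<close>

definition affine_form :: "('a::real_vector \<Rightarrow> real) \<Rightarrow> bool" where
  "affine_form l \<longleftrightarrow> (\<exists>f c. linear f \<and> (\<forall>z. l z = f z + c))"

definition coord_system :: "('a::real_vector \<Rightarrow> real) list \<Rightarrow> bool" where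
  "coord_system Ls \<longleftrightarrow> (\<forall>l\<in>set Ls. affine_form l) \<and>
     bij_betw (\<lambda>z. map (\<lambda>l. l z) Ls) UNIV {xs :: real list. length xs = length Ls}"

definition ray_sum :: "'a::real_vector set \<Rightarrow> 'a \<Rightarrow> 'a set" where
  "ray_sum A v = {a + t *\<^sub>R v | a t. a \<in> A \<and> t \<ge> 0}"

text \<open>yy_adapted S Ls x P: P is a Yao-Yao partition of the affine subspace S with
  center x, adapted to the coordinates Ls (restricted to S).  In the step,
  F = {z in S. z_1 = x_1}; the vector v lies in vec S (x + v in S) but not in
  vec F (l(x+v) \<noteq> l x); P_1 and P_{-1} are Yao-Yao partitions of F with center x
  adapted to the remaining coordinates restricted to F.  The Yao-Yao partition is
  {A + R_- v : A in P_{-1}} \<union> {A + R_+ v : A in P_1}, and A + R_- v = A + R_+ (-v).\<close>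
inductive yy_adapted :: "'a::real_vector set \<Rightarrow> ('a \<Rightarrow> real) list \<Rightarrow> 'a \<Rightarrow> 'a set set \<Rightarrow> bool"
  where
  base: "yy_adapted {x} [] x {{x}}"
| step: "\<lbrakk> x \<in> S; x + v \<in> S; l (x + v) \<noteq> l x; F = {z \<in> S. l z = l x};
           yy_adapted F Ls x P1; yy_adapted F Ls x Pm1;
           P = (\<lambda>A. ray_sum A (- v)) ` Pm1 \<union> (\<lambda>A. ray_sum A v) ` P1 \<rbrakk>
         \<Longrightarrow> yy_adapted S (l # Ls) x P"

definition meas_M :: "'a::euclidean_space measure \<Rightarrow> bool" where
  "meas_M \<mu> \<longleftrightarrow> sets \<mu> = sets borel \<and> finite_measure \<mu> \<and>
     (\<forall>a b. a \<noteq> 0 \<longrightarrow> emeasure \<mu> {z. a \<bullet> z = b} = 0)"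

definition narrow_conv :: "(nat \<Rightarrow> 'a::euclidean_space measure) \<Rightarrow> 'a measure \<Rightarrow> bool" where
  "narrow_conv \<mu>s \<mu> \<longleftrightarrow> (\<forall>\<phi> :: 'a \<Rightarrow> real. continuous_on UNIV \<phi> \<and> bounded (range \<phi>) \<longrightarrow>
     (\<lambda>p. integral\<^sup>L (\<mu>s p) \<phi>) \<longlonglongrightarrow> integral\<^sup>L \<mu> \<phi>)"

definition yy_equipartition :: "'a::euclidean_space measure \<Rightarrow> 'a set set \<Rightarrow> bool" where
  "yy_equipartition \<mu> P \<longleftrightarrow>
     (\<forall>A\<in>P. measure \<mu> A = measure \<mu> UNIV / 2 ^ DIM('a))"

definition is_center :: "'a::euclidean_space measure \<Rightarrow> ('a \<Rightarrow> real) list \<Rightarrow> 'a \<Rightarrow> bool" where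
  "is_center \<mu> Ls x \<longleftrightarrow> (\<exists>P. yy_adapted UNIV Ls x P \<and> yy_equipartition \<mu> P)"

end

theory Submission
  imports Defs
begin

lemma ray_sum_scale:
  assumes "s > 0" shows "ray_sum A (s *\<^sub>R v) = ray_sum A v"
proof -
  have "a + t *\<^sub>R (s *\<^sub>R v) \<in> ray_sum A v" if "a \<in> A" "t \<ge> 0" for a t
  proof -
    have "a + t *\<^sub>R (s *\<^sub>R v) = a + (t * s) *\<^sub>R v" by simp
    then show ?thesis unfolding ray_sum_def using that assms by fastforce
  qed
  moreover have "a + t *\<^sub>R v \<in> ray_sum A (s *\<^sub>R v)" if "a \<in> A" "t \<ge> 0" for a t
  proof -
    have "a + t *\<^sub>R v = a + (t / s) *\<^sub>R (s *\<^sub>R v)" using assms by simp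
    then show ?thesis unfolding ray_sum_def using that assms by fastforce
  qed
  ultimately show ?thesis unfolding ray_sum_def by blast
qed

lemma affine_formE:
  assumes "affine_form l"
  obtains f c where "linear f" "\<And>z. l z = f z + c"
  using assms unfolding affine_form_def by blast

lemma affine_form_comb:
  assumes "affine_form l"
  shows "l (a + s *\<^sub>R (b - c)) = l a + s * (l b - l c)"
proof -
  obtain f k where f: "linear f" "\<And>z. l z = f z + k" using assms affine_formE by blast
  show ?thesis using f by (simp add: linear_add linear_scale linear_diff algebra_simps)
qed

lemma affine_form_continuous:
  fixes l :: "'a::euclidean_space \<Rightarrow> real"
  assumes "affine_form l"
  shows "continuous_on UNIV l"
proof -
  obtain f k where f: "linear f" "\<And>z. l z = f z + k" using assms affine_formE by blast
  have "l = (\<lambda>z. f z + k)" using f by auto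
  then show ?thesis using f linear_continuous_on[of f UNIV] 
    by (auto intro!: continuous_intros simp: linear_conv_bounded_linear)
qed

lemma affine_level:
  assumes "affine S" "affine_form l"
  shows "affine {z\<in>S. l z = d}"
proof -
  obtain f k where f: "linear f" "\<And>z. l z = f z + k" using assms affine_formE by blast
  show ?thesis unfolding affine_def
  proof (intro ballI allI impI)
    fix a b u v assume a: "a \<in> {z\<in>S. l z = d}" and b: "b \<in> {z\<in>S. l z = d}" and uv: "u + v = (1::real)"
    have "u *\<^sub>R a + v *\<^sub>R b \<in> S" using assms(1) a b uv unfolding affine_def by auto
    moreover have "l (u *\<^sub>R a + v *\<^sub>R b) = u * f a + v * f b + k"
      using f by (simp add: linear_add linear_scale)
    moreover have "u * l a + v * l b = u * f a + v * f b + (u+v)*k" using f by (simp add: algebra_simps)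
    moreover have "l a = d" "l b = d" using a b by auto
    ultimately show "u *\<^sub>R a + v *\<^sub>R b \<in> {z\<in>S. l z = d}" using uv
      by simp (metis distrib_right mult_1)
  qed
qed

lemma yy_cells_sub:
  assumes "yy_adapted S Ls x P" "affine S" "\<forall>l\<in>set Ls. affine_form l"
  shows "x \<in> S \<and> (\<forall>A\<in>P. A \<subseteq> S)"
  using assms
proof (induction rule: yy_adapted.induct)
  case (base x) then show ?case by auto
next
  case (step x S v l F Ls P1 Pm1 P)
  have aF: "affine F" using step affine_level by auto
  then have IH1: "\<forall>A\<in>P1. A \<subseteq> F" and IH2: "\<forall>A\<in>Pm1. A \<subseteq> F" using step by auto
  have FS: "F \<subseteq> S" using step by auto
  have RS: "ray_sum A w \<subseteq> S" if "A \<subseteq> S" "w = v \<or> w = -v" for A w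
  proof
    fix z assume "z \<in> ray_sum A w"
    then obtain a t where z: "z = a + t *\<^sub>R w" "a \<in> A" "t \<ge> 0" unfolding ray_sum_def by auto
    have aS: "a \<in> S" using z that by auto
    have "a + t *\<^sub>R (x + v - x) \<in> S" "a + (-t) *\<^sub>R (x + v - x) \<in> S"
      using mem_affine_3_minus[OF step.prems(1) aS step.hyps(2) step.hyps(1)] by blast+
    then show "z \<in> S" using z(1) that(2) by auto
  qed
  have "\<forall>A\<in>P. A \<subseteq> S"
  proof
    fix B assume "B \<in> P"
    then obtain A w where "B = ray_sum A w" "A \<subseteq> S" "w = v \<or> w = -v"
      using step.hyps(7) IH1 IH2 FS by blast
    then show "B \<subseteq> S" using RS by blast
  qed
  then show ?case using step.hyps(1) by blast
qed

lemma yy_halfspace: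
  assumes "yy_adapted S Ls x P" "linear h"
  shows "\<exists>A\<in>P. \<forall>a\<in>A. h (a - x) \<ge> (0::real)"
  using assms
proof (induction rule: yy_adapted.induct)
  case (base x) then show ?case by (auto simp: linear_0)
next
  case (step x S v l F Ls P1 Pm1 P)
  show ?case
  proof (cases "h v \<ge> 0")
    case True
    then obtain A where A: "A \<in> P1" "\<forall>a\<in>A. h (a - x) \<ge> 0" using step by auto
    have "\<forall>z\<in>ray_sum A v. h (z - x) \<ge> 0"
    proof
      fix z assume "z \<in> ray_sum A v"
      then obtain a t where "z = a + t *\<^sub>R v" "a \<in> A" "t \<ge> 0" unfolding ray_sum_def by auto
      moreover have "h (a + t *\<^sub>R v - x) = h (a - x) + t * h v"
      proof -
        have e: "a + t *\<^sub>R v - x = (a - x) + t *\<^sub>R v" by simp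
        show ?thesis unfolding e using linear_add[OF step.prems] linear_scale[OF step.prems] by simp
      qed
      ultimately show "h (z - x) \<ge> 0" using A True by auto
    qed
    then show ?thesis using A step by blast
  next
    case False
    then obtain A where A: "A \<in> Pm1" "\<forall>a\<in>A. h (a - x) \<ge> 0" using step by auto
    have "\<forall>z\<in>ray_sum A (-v). h (z - x) \<ge> 0"
    proof
      fix z assume "z \<in> ray_sum A (-v)"
      then obtain a t where "z = a + t *\<^sub>R (-v)" "a \<in> A" "t \<ge> 0" unfolding ray_sum_def by auto
      moreover have "h (a + t *\<^sub>R (-v) - x) = h (a - x) - t * h v"
      proof -
        have e: "a + t *\<^sub>R (-v) - x = (a - x) + (-t) *\<^sub>R v" by simp
        show ?thesis unfolding e using linear_add[OF step.prems, of "a-x" "(-t) *\<^sub>R v"] linear_scale[OF step.prems, of "-t" v] by simp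
      qed
      ultimately show "h (z - x) \<ge> 0" using A False mult_nonneg_nonpos[of t "h v"] by force
    qed
    then show ?thesis using A step by blast
  qed
qed

definition fmb :: "'a::euclidean_space measure \<Rightarrow> bool" where
  "fmb M \<longleftrightarrow> sets M = sets borel \<and> finite_measure M"

lemma fmb_space: "fmb M \<Longrightarrow> space M = UNIV"
  unfolding fmb_def by (metis sets_eq_imp_space_eq space_borel)

lemma fmb_meas: "fmb M \<Longrightarrow> f \<in> borel_measurable borel \<Longrightarrow> f \<in> borel_measurable M"
  unfolding fmb_def using measurable_cong_sets by blast

lemma fmb_sets: "fmb M \<Longrightarrow> A \<in> sets borel \<Longrightarrow> A \<in> sets M"
  unfolding fmb_def by auto

lemma fmb_cont: "fmb M \<Longrightarrow> continuous_on UNIV f \<Longrightarrow> f \<in> borel_measurable M"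
  using fmb_meas borel_measurable_continuous_onI by blast

lemma fmb_integrable:
  fixes f :: "_ \<Rightarrow> real"
  assumes "fmb M" "f \<in> borel_measurable M" "\<And>z. \<bar>f z\<bar> \<le> B"
  shows "integrable M f"
proof -
  interpret finite_measure M using assms unfolding fmb_def by auto
  show ?thesis using assms by (intro integrable_const_bound[of _ B]) auto
qed

lemma fmb_int_le_measure:
  fixes f :: "_ \<Rightarrow> real"
  assumes "fmb M" "f \<in> borel_measurable M" "A \<in> sets borel" "\<And>z. f z \<le> indicator A z" "\<And>z. \<bar>f z\<bar> \<le> B"
  shows "integral\<^sup>L M f \<le> measure M A"
proof -
  have "integral\<^sup>L M f \<le> integral\<^sup>L M (indicator A)"
  proof (rule integral_mono)
    show "integrable M f" using assms fmb_integrable by blast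
    show "integrable M (indicator A :: _ \<Rightarrow> real)" using assms
      by (intro fmb_integrable[where B=1]) (auto simp: indicator_def intro!: borel_measurable_indicator fmb_sets)
  qed (use assms in auto)
  also have "\<dots> = measure M A" using assms fmb_space[OF assms(1)] by (simp add: Bochner_Integration.integral_indicator)
  finally show ?thesis .
qed

lemma fmb_measure_le_int:
  fixes f :: "_ \<Rightarrow> real"
  assumes "fmb M" "f \<in> borel_measurable M" "A \<in> sets borel" "\<And>z. indicator A z \<le> f z" "\<And>z. \<bar>f z\<bar> \<le> B"
  shows "measure M A \<le> integral\<^sup>L M f"
proof -
  have "integral\<^sup>L M (indicator A) \<le> integral\<^sup>L M f"
  proof (rule integral_mono)
    show "integrable M f" using assms fmb_integrable by blast
    show "integrable M (indicator A :: _ \<Rightarrow> real)" using assms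
      by (intro fmb_integrable[where B=1]) (auto simp: indicator_def intro!: borel_measurable_indicator fmb_sets)
  qed (use assms in auto)
  moreover have "integral\<^sup>L M (indicator A) = measure M A" using assms fmb_space[OF assms(1)] by (simp add: Bochner_Integration.integral_indicator)
  ultimately show ?thesis by simp
qed

lemma cutoff_cont:
  fixes q :: "'a::euclidean_space \<Rightarrow> real"
  assumes "continuous_on UNIV q" "d > 0"
  shows "continuous_on UNIV (\<lambda>z. max 0 (min 1 (1 - q z / d)))"
  using assms by (intro continuous_intros) auto

lemma narrow_gen:
  fixes q :: "'a::euclidean_space \<Rightarrow> real"
  assumes nc: "narrow_conv \<nu>s \<nu>" and fs: "\<And>j. fmb (\<nu>s j)" and f: "fmb \<nu>"
    and q: "continuous_on UNIV q" and d: "d > 0" and small: "measure \<nu> {z. q z < d} < e"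
  shows "\<exists>N. \<forall>j\<ge>N. measure (\<nu>s j) {z. q z \<le> 0} < e"
proof -
  define \<phi> where "\<phi> z = max 0 (min 1 (1 - q z / d))" for z
  have c\<phi>: "continuous_on UNIV \<phi>" unfolding \<phi>_def using cutoff_cont[OF q d] by simp
  have b\<phi>: "\<And>z. \<bar>\<phi> z\<bar> \<le> 1" unfolding \<phi>_def by auto
  have "bounded (range \<phi>)" using b\<phi> unfolding bounded_iff by (metis rangeE real_norm_def)
  then have lim: "(\<lambda>p. integral\<^sup>L (\<nu>s p) \<phi>) \<longlonglongrightarrow> integral\<^sup>L \<nu> \<phi>" using nc c\<phi> unfolding narrow_conv_def by auto
  have o1: "{z. q z < d} \<in> sets borel"
    using q by (intro borel_open open_Collect_less) (auto intro: continuous_intros)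
  have o2: "{z. q z \<le> 0} \<in> sets borel"
    using q by (intro borel_closed closed_Collect_le) (auto intro: continuous_intros)
  have "integral\<^sup>L \<nu> \<phi> \<le> measure \<nu> {z. q z < d}"
  proof (rule fmb_int_le_measure[OF f fmb_cont[OF f c\<phi>] o1 _ b\<phi>])
    fix z show "\<phi> z \<le> indicator {z. q z < d} z"
      unfolding \<phi>_def using d by (auto simp: indicator_def field_simps)
  qed
  then have "integral\<^sup>L \<nu> \<phi> < e" using small by simp
  then obtain N where N: "\<forall>j\<ge>N. integral\<^sup>L (\<nu>s j) \<phi> < e"
    using lim order_tendstoD(2) eventually_sequentially by metis
  have "measure (\<nu>s j) {z. q z \<le> 0} < e" if "j \<ge> N" for j
  proof -
    have "measure (\<nu>s j) {z. q z \<le> 0} \<le> integral\<^sup>L (\<nu>s j) \<phi>"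
    proof (rule fmb_measure_le_int[OF fs fmb_cont[OF fs c\<phi>] o2 _ b\<phi>])
      fix z show "indicator {z. q z \<le> 0} z \<le> \<phi> z"
        unfolding \<phi>_def using d by (auto simp: indicator_def field_simps)
    qed
    then show ?thesis using N that order_le_less_trans by blast
  qed
  then show ?thesis by blast
qed

lemma narrow_mass:
  assumes nc: "narrow_conv \<nu>s \<nu>" and fs: "\<And>j. fmb (\<nu>s j)" and f: "fmb \<nu>"
  shows "(\<lambda>j. measure (\<nu>s j) UNIV) \<longlonglongrightarrow> measure \<nu> UNIV"
proof -
  have "(\<lambda>j. integral\<^sup>L (\<nu>s j) (\<lambda>_. 1::real)) \<longlonglongrightarrow> integral\<^sup>L \<nu> (\<lambda>_. 1::real)"
    using nc unfolding narrow_conv_def by (auto intro!: continuous_intros)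
  then show ?thesis using fmb_space[OF f] fmb_space[OF fs] by simp
qed

lemma narrow_tight:
  fixes x :: "'a::euclidean_space"
  assumes nc: "narrow_conv \<nu>s \<nu>" and fs: "\<And>j. fmb (\<nu>s j)" and f: "fmb \<nu>" and e: "e > 0"
  shows "\<exists>R N. \<forall>j\<ge>N. measure (\<nu>s j) {z. R \<le> dist z x} < e"
proof -
  interpret finite_measure \<nu> using f unfolding fmb_def by auto
  define A where "A n = {z. real n < dist z x}" for n :: nat
  have "open (A n)" for n unfolding A_def
    by (rule open_Collect_less) (intro continuous_intros)+
  then have "range A \<subseteq> sets \<nu>" using fmb_sets[OF f] by auto
  moreover have "decseq A" unfolding A_def decseq_def by auto
  ultimately have "(\<lambda>n. measure \<nu> (A n)) \<longlonglongrightarrow> measure \<nu> (\<Inter>n. A n)"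
    by (rule finite_Lim_measure_decseq)
  moreover have "(\<Inter>n. A n) = {}"
  proof -
    have False if z: "z \<in> (\<Inter>n. A n)" for z
    proof -
      obtain n where n: "dist z x < real n" using reals_Archimedean2 by blast
      have "z \<in> A n" using z by blast
      then show False using n unfolding A_def by simp
    qed
    then show ?thesis by blast
  qed
  ultimately have "(\<lambda>n. measure \<nu> (A n)) \<longlonglongrightarrow> 0" by simp
  then obtain n where n: "measure \<nu> (A n) < e"
    using e order_tendstoD(2) eventually_sequentially by (metis order_refl)
  have "\<exists>N. \<forall>j\<ge>N. measure (\<nu>s j) {z. (real n + 1) - dist z x \<le> 0} < e"
    by (rule narrow_gen[OF nc fs f, where d=1]) (use n in \<open>auto intro!: continuous_intros simp: A_def\<close>)
  then show ?thesis by (intro exI[of _ "real n + 1"]) (auto simp: algebra_simps)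
qed

lemma narrow_near:
  fixes g :: "'a::euclidean_space \<Rightarrow> real"
  assumes nc: "narrow_conv \<nu>s \<nu>" and fs: "\<And>j. fmb (\<nu>s j)" and f: "fmb \<nu>" and e: "e > 0"
    and g: "continuous_on UNIV g" and g0: "measure \<nu> {z. g z = 0} = 0"
  shows "\<exists>\<delta>>0. \<exists>N. measure \<nu> {z. \<bar>g z\<bar> \<le> \<delta>} < e \<and> (\<forall>j\<ge>N. measure (\<nu>s j) {z. \<bar>g z\<bar> \<le> \<delta>} < e)"
proof -
  interpret finite_measure \<nu> using f unfolding fmb_def by auto
  define B where "B n = {z. \<bar>g z\<bar> < inverse (real n + 1)}" for n :: nat
  have "open (B n)" for n unfolding B_def
    using continuous_on_norm[OF g] by (intro open_Collect_less continuous_on_const) auto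
  then have "range B \<subseteq> sets \<nu>" using fmb_sets[OF f] by auto
  moreover have "decseq B" unfolding B_def decseq_def
    by (auto intro: order_less_le_trans le_imp_inverse_le)
  ultimately have "(\<lambda>n. measure \<nu> (B n)) \<longlonglongrightarrow> measure \<nu> (\<Inter>n. B n)"
    by (rule finite_Lim_measure_decseq)
  moreover have "(\<Inter>n. B n) = {z. g z = 0}"
  proof -
    have "g z = 0" if z: "z \<in> (\<Inter>n. B n)" for z
    proof (rule ccontr)
      assume "g z \<noteq> 0"
      then obtain n where n: "inverse (real (Suc n)) < \<bar>g z\<bar>"
        using reals_Archimedean[of "\<bar>g z\<bar>"] by auto
      have "z \<in> B n" using z by blast
      then show False using n unfolding B_def by (simp add: add.commute)
    qed
    moreover have "z \<in> (\<Inter>n. B n)" if "g z = 0" for z using that unfolding B_def by auto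
    ultimately show ?thesis by blast
  qed
  ultimately have "(\<lambda>n. measure \<nu> (B n)) \<longlonglongrightarrow> 0" using g0 by simp
  then obtain n where n: "measure \<nu> (B n) < e"
    using e order_tendstoD(2) eventually_sequentially by (metis order_refl)
  define \<delta> where "\<delta> = inverse (real n + 1) / 2"
  have \<delta>: "\<delta> > 0" unfolding \<delta>_def by auto
  have "\<exists>N. \<forall>j\<ge>N. measure (\<nu>s j) {z. \<bar>g z\<bar> - \<delta> \<le> 0} < e"
  proof (rule narrow_gen[OF nc fs f _ \<delta>])
    show "continuous_on UNIV (\<lambda>z. \<bar>g z\<bar> - \<delta>)" using g by (intro continuous_intros)
    have "{z. \<bar>g z\<bar> - \<delta> < \<delta>} = B n" unfolding B_def \<delta>_def by auto
    then show "measure \<nu> {z. \<bar>g z\<bar> - \<delta> < \<delta>} < e" using n by simp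
  qed
  moreover have "measure \<nu> {z. \<bar>g z\<bar> \<le> \<delta>} \<le> measure \<nu> (B n)"
    using \<open>range B \<subseteq> sets \<nu>\<close> \<delta> unfolding B_def \<delta>_def
    by (intro finite_measure_mono) (auto simp: field_simps)
  ultimately show ?thesis using n \<delta> by (intro exI[of _ \<delta>]) auto
qed

lemma int_diff_bound:
  fixes f k :: "'a::euclidean_space \<Rightarrow> real"
  assumes Q: "fmb Q" and fm: "f \<in> borel_measurable borel" and km: "k \<in> borel_measurable borel"
    and fb: "\<And>z. \<bar>f z\<bar> \<le> B" and kb: "\<And>z. \<bar>k z\<bar> \<le> B"
    and A: "A \<in> sets borel" and c: "c \<ge> 0" and d: "\<And>z. \<bar>f z - k z\<bar> \<le> c * indicator A z"
  shows "\<bar>integral\<^sup>L Q f - integral\<^sup>L Q k\<bar> \<le> c * measure Q A"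
proof -
  have i1: "integrable Q f" using fmb_integrable[OF Q fmb_meas[OF Q fm] fb] .
  have i2: "integrable Q k" using fmb_integrable[OF Q fmb_meas[OF Q km] kb] .
  have "(indicator A :: _ \<Rightarrow> real) \<in> borel_measurable Q"
    using borel_measurable_indicator[OF fmb_sets[OF Q A]] .
  then have "integrable Q (indicator A :: _ \<Rightarrow> real)"
    by (rule fmb_integrable[OF Q, where B=1]) (auto simp: indicator_def)
  then have i3: "integrable Q (\<lambda>z. c * indicator A z)" by (rule integrable_mult_right)
  have "\<bar>integral\<^sup>L Q f - integral\<^sup>L Q k\<bar> = \<bar>integral\<^sup>L Q (\<lambda>z. f z - k z)\<bar>"
    using i1 i2 by simp
  also have "\<dots> \<le> integral\<^sup>L Q (\<lambda>z. \<bar>f z - k z\<bar>)" by (rule integral_abs_bound)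
  also have "\<dots> \<le> integral\<^sup>L Q (\<lambda>z. c * indicator A z)"
    using i1 i2 i3 d by (intro integral_mono) auto
  also have "\<dots> = c * measure Q A"
    using fmb_space[OF Q] by (simp add: Bochner_Integration.integral_indicator)
  finally show ?thesis .
qed

lemma narrow_ind:
  fixes t h :: "'a::euclidean_space \<Rightarrow> real"
  assumes nc: "narrow_conv \<nu>s \<nu>" and fs: "\<And>j. fmb (\<nu>s j)" and f: "fmb \<nu>"
    and h: "continuous_on UNIV h" and hb: "\<And>z. \<bar>h z\<bar> \<le> M"
    and t: "continuous_on UNIV t" and t0: "measure \<nu> {z. t z = 0} = 0"
  shows "(\<lambda>j. integral\<^sup>L (\<nu>s j) (\<lambda>z. indicator {z. t z \<ge> 0} z * h z))
           \<longlonglongrightarrow> integral\<^sup>L \<nu> (\<lambda>z. indicator {z. t z \<ge> 0} z * h z)"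
proof (rule LIMSEQ_I)
  fix r :: real assume r: "r > 0"
  have M0: "M \<ge> 0" using hb[of 0] by linarith
  define e where "e = r / (4 * (M + 1))"
  have e: "e > 0" using r M0 unfolding e_def by auto
  obtain \<delta> N1 where \<delta>: "\<delta> > 0" and n1: "measure \<nu> {z. \<bar>t z\<bar> \<le> \<delta>} < e"
    and n2: "\<forall>j\<ge>N1. measure (\<nu>s j) {z. \<bar>t z\<bar> \<le> \<delta>} < e"
    using narrow_near[OF nc fs f e t t0] by blast
  define ch where "ch z = max 0 (min 1 (1 + t z / \<delta>))" for z
  define k where "k z = ch z * h z" for z
  have kc: "continuous_on UNIV k" unfolding k_def ch_def using t h \<delta> by (intro continuous_intros) auto
  have chb: "0 \<le> ch z \<and> ch z \<le> 1" for z unfolding ch_def by auto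
  have kb: "\<bar>k z\<bar> \<le> M" for z unfolding k_def using chb[of z] hb[of z]
    by (simp add: abs_mult) (metis abs_of_nonneg mult_left_le_one_le abs_ge_zero order_trans mult_le_cancel_right1)
  have "bounded (range k)" using kb unfolding bounded_iff by (metis rangeE real_norm_def)
  then have "(\<lambda>p. integral\<^sup>L (\<nu>s p) k) \<longlonglongrightarrow> integral\<^sup>L \<nu> k" using nc kc unfolding narrow_conv_def by auto
  then obtain N2 where n3: "\<forall>j\<ge>N2. \<bar>integral\<^sup>L (\<nu>s j) k - integral\<^sup>L \<nu> k\<bar> < r / 2"
    using r by (metis LIMSEQ_D half_gt_zero real_norm_def)
  define F where "F z = indicator {z. t z \<ge> 0} z * h z" for z
  have Fm: "F \<in> borel_measurable borel" unfolding F_def using t h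
    by (intro borel_measurable_times borel_measurable_indicator borel_measurable_continuous_onI)
       (auto intro!: borel_closed closed_Collect_le continuous_intros)
  have km: "k \<in> borel_measurable borel" using kc by (rule borel_measurable_continuous_onI)
  have Fb: "\<bar>F z\<bar> \<le> M" for z unfolding F_def using hb[of z] M0 by (auto simp: indicator_def)
  have Ab: "{z. \<bar>t z\<bar> \<le> \<delta>} \<in> sets borel" using t by (auto intro!: borel_closed closed_Collect_le continuous_intros)
  have d: "\<bar>F z - k z\<bar> \<le> M * indicator {z. \<bar>t z\<bar> \<le> \<delta>} z" for z
  proof (cases "t z \<ge> 0")
    case True then have "ch z = 1" unfolding ch_def using \<delta> by auto
    then show ?thesis using True M0 unfolding F_def k_def by (auto simp: indicator_def)
  next
    case False
    show ?thesis
    proof (cases "t z \<le> - \<delta>")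
      case True then have "ch z = 0" unfolding ch_def using \<delta> by (auto simp: field_simps)
      then show ?thesis using False M0 unfolding F_def k_def by (auto simp: indicator_def)
    next
      case False2: False
      then have "\<bar>t z\<bar> \<le> \<delta>" using False by auto
      then show ?thesis using False kb[of z] unfolding F_def by (auto simp: indicator_def)
    qed
  qed
  show "\<exists>no. \<forall>n\<ge>no. norm (integral\<^sup>L (\<nu>s n) (\<lambda>z. indicator {z. t z \<ge> 0} z * h z) - integral\<^sup>L \<nu> (\<lambda>z. indicator {z. t z \<ge> 0} z * h z)) < r"
  proof (intro exI allI impI)
    fix j assume j: "max N1 N2 \<le> j"
    have a1: "\<bar>integral\<^sup>L (\<nu>s j) F - integral\<^sup>L (\<nu>s j) k\<bar> \<le> M * measure (\<nu>s j) {z. \<bar>t z\<bar> \<le> \<delta>}"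
      by (rule int_diff_bound[OF fs Fm km Fb kb Ab M0 d])
    have a2: "\<bar>integral\<^sup>L \<nu> F - integral\<^sup>L \<nu> k\<bar> \<le> M * measure \<nu> {z. \<bar>t z\<bar> \<le> \<delta>}"
      by (rule int_diff_bound[OF f Fm km Fb kb Ab M0 d])
    have "M * measure (\<nu>s j) {z. \<bar>t z\<bar> \<le> \<delta>} \<le> M * e" using n2 j M0 by (intro mult_left_mono) auto
    moreover have "M * measure \<nu> {z. \<bar>t z\<bar> \<le> \<delta>} \<le> M * e" using n1 M0 by (intro mult_left_mono) auto
    moreover have "M * e < r / 4" using M0 r unfolding e_def by (simp add: field_simps)
    moreover have "\<bar>integral\<^sup>L (\<nu>s j) k - integral\<^sup>L \<nu> k\<bar> < r / 2" using n3 j by auto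
    ultimately have "\<bar>integral\<^sup>L (\<nu>s j) F - integral\<^sup>L \<nu> F\<bar> < r" using a1 a2 by linarith
    then show "norm (integral\<^sup>L (\<nu>s j) (\<lambda>z. indicator {z. t z \<ge> 0} z * h z) - integral\<^sup>L \<nu> (\<lambda>z. indicator {z. t z \<ge> 0} z * h z)) < r"
      unfolding F_def by simp
  qed
qed

lemma narrow_unif:
  fixes x :: "'a::euclidean_space" and gs :: "nat \<Rightarrow> 'a \<Rightarrow> real"
  assumes nc: "narrow_conv \<nu>s \<nu>" and fs: "\<And>j. fmb (\<nu>s j)" and f: "fmb \<nu>"
    and gm: "\<And>j. gs j \<in> borel_measurable borel" and gm2: "g \<in> borel_measurable borel"
    and bd: "\<And>j z. \<bar>gs j z\<bar> \<le> M" and bd2: "\<And>z. \<bar>g z\<bar> \<le> M"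
    and un: "\<And>R \<epsilon>. \<epsilon> > 0 \<Longrightarrow> \<exists>N. \<forall>j\<ge>N. \<forall>z. dist z x \<le> R \<longrightarrow> \<bar>gs j z - g z\<bar> \<le> \<epsilon>"
  shows "(\<lambda>j. integral\<^sup>L (\<nu>s j) (gs j) - integral\<^sup>L (\<nu>s j) g) \<longlonglongrightarrow> 0"
proof (rule LIMSEQ_I)
  fix r :: real assume r: "r > 0"
  have M0: "M \<ge> 0" using bd2[of 0] by linarith
  define m where "m = measure \<nu> UNIV + 1"
  have m1: "m \<ge> 1" unfolding m_def by simp
  have "(\<lambda>j. measure (\<nu>s j) UNIV) \<longlonglongrightarrow> measure \<nu> UNIV" by (rule narrow_mass[OF nc fs f])
  then obtain N0 where N0: "\<forall>j\<ge>N0. measure (\<nu>s j) UNIV < m"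
    using order_tendstoD(2)[of _ _ sequentially m] eventually_sequentially unfolding m_def by (metis less_add_one)
  define e where "e = r / (4 * (M + 1))"
  have e: "e > 0" using r M0 unfolding e_def by auto
  obtain R N1 where N1: "\<forall>j\<ge>N1. measure (\<nu>s j) {z. R \<le> dist z x} < e"
    using narrow_tight[OF nc fs f e, of x] by blast
  define \<epsilon> where "\<epsilon> = r / (4 * m)"
  have \<epsilon>: "\<epsilon> > 0" using r m1 unfolding \<epsilon>_def by auto
  obtain N2 where N2: "\<forall>j\<ge>N2. \<forall>z. dist z x \<le> R \<longrightarrow> \<bar>gs j z - g z\<bar> \<le> \<epsilon>"
    using un[OF \<epsilon>] by blast
  have Ab: "{z. R \<le> dist z x} \<in> sets borel"
    by (intro borel_closed closed_Collect_le continuous_intros)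
  show "\<exists>no. \<forall>n\<ge>no. norm (integral\<^sup>L (\<nu>s n) (gs n) - integral\<^sup>L (\<nu>s n) g - 0) < r"
  proof (intro exI allI impI)
    fix j assume j: "max N0 (max N1 N2) \<le> j"
    have "(indicator {z. R \<le> dist z x} :: _ \<Rightarrow> real) \<in> borel_measurable (\<nu>s j)"
      using borel_measurable_indicator[OF fmb_sets[OF fs Ab]] .
    then have ii: "integrable (\<nu>s j) (indicator {z. R \<le> dist z x} :: _ \<Rightarrow> real)"
      by (rule fmb_integrable[OF fs, where B=1]) (auto simp: indicator_def)
    have i1: "integrable (\<nu>s j) (gs j)" using fmb_integrable[OF fs fmb_meas[OF fs gm] bd] .
    have i2: "integrable (\<nu>s j) g" using fmb_integrable[OF fs fmb_meas[OF fs gm2] bd2] .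
    have c: "integrable (\<nu>s j) (\<lambda>_. \<epsilon>)" by (rule fmb_integrable[OF fs, where B="\<bar>\<epsilon>\<bar>"]) auto
    have i3: "integrable (\<nu>s j) (\<lambda>z. \<epsilon> + 2 * M * indicator {z. R \<le> dist z x} z)"
      by (rule Bochner_Integration.integrable_add[OF c integrable_mult_right[OF ii]])
    have pw: "\<bar>gs j z - g z\<bar> \<le> \<epsilon> + 2 * M * indicator {z. R \<le> dist z x} z" for z
    proof (cases "R \<le> dist z x")
      case True then show ?thesis using bd[of j z] bd2[of z] \<epsilon> by (auto simp: indicator_def)
    next
      case False then show ?thesis using N2 j by (auto simp: indicator_def)
    qed
    have "\<bar>integral\<^sup>L (\<nu>s j) (gs j) - integral\<^sup>L (\<nu>s j) g\<bar> = \<bar>integral\<^sup>L (\<nu>s j) (\<lambda>z. gs j z - g z)\<bar>"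
      using i1 i2 by simp
    also have "\<dots> \<le> integral\<^sup>L (\<nu>s j) (\<lambda>z. \<bar>gs j z - g z\<bar>)" by (rule integral_abs_bound)
    also have "\<dots> \<le> integral\<^sup>L (\<nu>s j) (\<lambda>z. \<epsilon> + 2 * M * indicator {z. R \<le> dist z x} z)"
      using i1 i2 i3 pw by (intro integral_mono) auto
    also have "\<dots> = \<epsilon> * measure (\<nu>s j) UNIV + 2 * M * measure (\<nu>s j) {z. R \<le> dist z x}"
      using ii fmb_space[OF fs] by (simp add: Bochner_Integration.integral_add[OF c integrable_mult_right[OF ii]] Bochner_Integration.integral_indicator mult.commute)
    also have "\<dots> \<le> \<epsilon> * m + 2 * M * e"
      using N0 N1 j \<epsilon> M0 by (intro add_mono mult_left_mono) auto
    also have "\<dots> < r"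
    proof -
      have "\<epsilon> * m = r / 4" unfolding \<epsilon>_def using m1 by simp
      moreover have "2 * M * e < r / 2" unfolding e_def using M0 r by (simp add: field_simps)
      ultimately show ?thesis using r by linarith
    qed
    finally show "norm (integral\<^sup>L (\<nu>s j) (gs j) - integral\<^sup>L (\<nu>s j) g - 0) < r" by simp
  qed
qed

definition PF :: "'a::euclidean_space measure \<Rightarrow> 'a set \<Rightarrow> ('a \<Rightarrow> 'a) \<Rightarrow> 'a measure" where
  "PF M H p = distr (restrict_space M H) borel p"

lemma PF_meas:
  assumes "fmb M" "p \<in> borel_measurable borel"
  shows "p \<in> measurable (restrict_space M H) borel"
  by (rule measurable_restrict_space1[OF fmb_meas[OF assms]])

lemma PF_fmb:
  assumes M: "fmb M" and H: "H \<in> sets borel" and p: "p \<in> borel_measurable borel"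
  shows "fmb (PF M H p)"
proof -
  have "finite_measure (restrict_space M H)"
    using M H by (intro finite_measure_restrict_space) (auto simp: fmb_def)
  then have "finite_measure (PF M H p)" unfolding PF_def
    using PF_meas[OF M p] by (rule finite_measure.finite_measure_distr)
  then show ?thesis unfolding fmb_def PF_def by simp
qed

lemma PF_integral:
  fixes \<phi> :: "'a::euclidean_space \<Rightarrow> real"
  assumes M: "fmb M" and H: "H \<in> sets borel" and p: "p \<in> borel_measurable borel"
    and \<phi>: "\<phi> \<in> borel_measurable borel"
  shows "integral\<^sup>L (PF M H p) \<phi> = integral\<^sup>L M (\<lambda>z. indicator H z * \<phi> (p z))"
proof -
  have "integral\<^sup>L (PF M H p) \<phi> = integral\<^sup>L (restrict_space M H) (\<lambda>z. \<phi> (p z))"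
    unfolding PF_def using PF_meas[OF M p] \<phi> by (rule integral_distr)
  also have "\<dots> = integral\<^sup>L M (\<lambda>z. indicator H z *\<^sub>R \<phi> (p z))"
    using M H fmb_space[OF M] fmb_sets[OF M] by (intro integral_restrict_space) auto
  finally show ?thesis by simp
qed

lemma PF_measure:
  assumes M: "fmb M" and H: "H \<in> sets borel" and p: "p \<in> borel_measurable borel"
    and A: "A \<in> sets borel"
  shows "measure (PF M H p) A = measure M (H \<inter> p -` A)"
proof -
  have "measure (PF M H p) A = measure (restrict_space M H) (p -` A \<inter> space (restrict_space M H))"
    unfolding PF_def using PF_meas[OF M p] A by (intro measure_distr) auto
  also have "\<dots> = measure M (H \<inter> p -` A)"
    using M H fmb_space[OF M] fmb_sets[OF M] by (subst measure_restrict_space) (auto simp: Int_commute space_restrict_space)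
  finally show ?thesis .
qed

lemma ray_sum_char:
  fixes f :: "'a::real_vector \<Rightarrow> real"
  assumes f: "linear f" and fw: "f w = 1" and A: "\<forall>a\<in>A. f (a - x) = 0" and \<sigma>: "\<sigma> = 1 \<or> \<sigma> = -1"
  shows "ray_sum A (\<sigma> *\<^sub>R w) = {z. \<sigma> * f (z - x) \<ge> 0 \<and> z - f (z - x) *\<^sub>R w \<in> A}"
proof (intro set_eqI iffI)
  fix z assume "z \<in> ray_sum A (\<sigma> *\<^sub>R w)"
  then obtain a s where z: "z = a + s *\<^sub>R (\<sigma> *\<^sub>R w)" "a \<in> A" "s \<ge> 0" unfolding ray_sum_def by auto
  have "f (z - x) = f (a - x) + s * \<sigma>"
  proof -
    have e: "z - x = (a - x) + (s * \<sigma>) *\<^sub>R w" using z by (simp add: algebra_simps)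
    have "f (z - x) = f (a - x) + f ((s * \<sigma>) *\<^sub>R w)" unfolding e by (rule linear_add[OF f])
    then show ?thesis using f fw by (simp add: linear_scale)
  qed
  then have fz: "f (z - x) = s * \<sigma>" using A z by simp
  have "\<sigma> * \<sigma> = 1" using \<sigma> by auto
  then have "\<sigma> * f (z - x) = s" using fz by (metis mult.assoc mult.commute mult_1)
  moreover have "z - f (z - x) *\<^sub>R w = a" using fz z by (simp add: algebra_simps)
  ultimately show "z \<in> {z. \<sigma> * f (z - x) \<ge> 0 \<and> z - f (z - x) *\<^sub>R w \<in> A}"
    using z by auto
next
  fix z assume z: "z \<in> {z. \<sigma> * f (z - x) \<ge> 0 \<and> z - f (z - x) *\<^sub>R w \<in> A}"
  define a where "a = z - f (z - x) *\<^sub>R w"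
  define s where "s = \<sigma> * f (z - x)"
  have "\<sigma> * \<sigma> = 1" using \<sigma> by auto
  then have "z = a + s *\<^sub>R (\<sigma> *\<^sub>R w)" unfolding a_def s_def by (simp add: algebra_simps)
  moreover have "a \<in> A" "s \<ge> 0" using z unfolding a_def s_def by auto
  ultimately show "z \<in> ray_sum A (\<sigma> *\<^sub>R w)" unfolding ray_sum_def by blast
qed

lemma affine_form_proj:
  assumes g: "affine_form g" and f: "linear f"
  shows "affine_form (\<lambda>z. g (z - f (z - x) *\<^sub>R w))"
proof -
  obtain G c where G: "linear G" "\<And>z. g z = G z + c" using g affine_formE by blast
  have "linear (\<lambda>z. f z * G w)" unfolding linear_iff using f by (auto simp: linear_add linear_scale algebra_simps)
  then have "linear (\<lambda>z. G z - f z * G w)"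
    using G by (intro linear_compose_sub) auto
  moreover have "g (z - f (z - x) *\<^sub>R w) = (G z - f z * G w) + (f x * G w + c)" for z
  proof -
    have e1: "G (z - f (z - x) *\<^sub>R w) = G z - f (z - x) * G w"
      using linear_diff[OF G(1)] linear_scale[OF G(1)] by simp
    have e2: "f (z - x) = f z - f x" using linear_diff[OF f] by simp
    show ?thesis unfolding G(2) e1 by (simp add: e2 algebra_simps)
  qed
  ultimately show ?thesis unfolding affine_form_def by blast
qed

lemma proj_unif:
  fixes \<phi> :: "'a::euclidean_space \<Rightarrow> real" and f :: "'a \<Rightarrow> real"
  assumes \<phi>: "continuous_on UNIV \<phi>" and f: "linear f" and ws: "ws \<longlonglongrightarrow> w0" and e: "\<epsilon> > 0"
  shows "\<exists>N. \<forall>j\<ge>N. \<forall>z. dist z x \<le> R \<longrightarrow>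
           \<bar>\<phi> (z - f (z - x) *\<^sub>R ws j) - \<phi> (z - f (z - x) *\<^sub>R w0)\<bar> \<le> \<epsilon>"
proof -
  obtain Bf where Bf: "Bf > 0" "\<And>y. norm (f y) \<le> Bf * norm y" using linear_bounded_pos[OF f] by blast
  define R0 where "R0 = max R 0"
  define R' where "R' = R0 + Bf * R0 * (norm w0 + 1)"
  have "uniformly_continuous_on (cball x R') \<phi>"
    using \<phi> by (intro compact_uniformly_continuous) (auto intro: continuous_on_subset)
  then obtain d where d: "d > 0" "\<And>a b. a \<in> cball x R' \<Longrightarrow> b \<in> cball x R' \<Longrightarrow> dist b a < d \<Longrightarrow> dist (\<phi> b) (\<phi> a) < \<epsilon>"
    unfolding uniformly_continuous_on_def using e by metis
  define \<eta> where "\<eta> = min 1 (d / (Bf * R0 + 1))"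
  have \<eta>: "\<eta> > 0" unfolding \<eta>_def R0_def using d Bf by (auto simp: field_simps add_pos_nonneg)
  obtain N where N: "\<forall>j\<ge>N. dist (ws j) w0 < \<eta>" using ws \<eta> by (metis LIMSEQ_D dist_norm)
  have "\<bar>\<phi> (z - f (z - x) *\<^sub>R ws j) - \<phi> (z - f (z - x) *\<^sub>R w0)\<bar> \<le> \<epsilon>"
    if j: "j \<ge> N" and z: "dist z x \<le> R" for j z
  proof -
    have dz: "norm (z - x) \<le> R0" using z unfolding R0_def by (simp add: dist_norm)
    have tz: "\<bar>f (z - x)\<bar> \<le> Bf * R0" using Bf(2)[of "z - x"] dz Bf(1)
      by (metis real_norm_def mult_left_mono less_imp_le order_trans)
    have dw: "norm (ws j - w0) < \<eta>" using N j by (simp add: dist_norm)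
    then have dw1: "norm (ws j) \<le> norm w0 + 1" using \<eta>_def
      by (metis add_le_cancel_left norm_triangle_sub order_trans less_imp_le min.bounded_iff diff_add_cancel)
    have R0: "R0 \<ge> 0" unfolding R0_def by simp
    have in1: "z - f (z - x) *\<^sub>R w0 \<in> cball x R'"
    proof -
      have "dist x (z - f (z - x) *\<^sub>R w0) = norm ((z - x) - f (z - x) *\<^sub>R w0)" by (simp add: dist_norm norm_minus_commute algebra_simps)
      also have "\<dots> \<le> norm (z - x) + \<bar>f (z - x)\<bar> * norm w0" by (metis norm_triangle_ineq4 norm_scaleR)
      also have "\<dots> \<le> R0 + Bf * R0 * (norm w0 + 1)"
        using dz tz by (intro add_mono) (auto intro!: mult_mono simp: Bf(1) R0 less_imp_le)
      finally show ?thesis unfolding R'_def by simp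
    qed
    have in2: "z - f (z - x) *\<^sub>R ws j \<in> cball x R'"
    proof -
      have "dist x (z - f (z - x) *\<^sub>R ws j) = norm ((z - x) - f (z - x) *\<^sub>R ws j)" by (simp add: dist_norm norm_minus_commute algebra_simps)
      also have "\<dots> \<le> norm (z - x) + \<bar>f (z - x)\<bar> * norm (ws j)" by (metis norm_triangle_ineq4 norm_scaleR)
      also have "\<dots> \<le> R0 + Bf * R0 * (norm w0 + 1)"
        using dz tz dw1 by (intro add_mono mult_mono) (auto simp: Bf(1) R0 less_imp_le)
      finally show ?thesis unfolding R'_def by simp
    qed
    have "dist (z - f (z - x) *\<^sub>R ws j) (z - f (z - x) *\<^sub>R w0) = \<bar>f (z - x)\<bar> * norm (ws j - w0)"
      by (simp add: dist_norm flip: scaleR_diff_right) (metis norm_minus_commute norm_scaleR real_norm_def scaleR_diff_right minus_diff_eq)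
    also have "\<dots> \<le> (Bf * R0) * \<eta>" using tz dw by (intro mult_mono) auto
    also have "\<dots> < d"
    proof -
      have "(Bf * R0) * \<eta> \<le> (Bf * R0) * (d / (Bf * R0 + 1))"
        unfolding \<eta>_def using Bf(1) R0 by (intro mult_left_mono) auto
      also have "\<dots> < d"
      proof -
        have p: "Bf * R0 + 1 > 0" using Bf(1) R0 by (intro add_nonneg_pos mult_nonneg_nonneg) auto
        have "(Bf * R0) * d < d * (Bf * R0 + 1)" using d by (simp add: algebra_simps)
        then have "(Bf * R0) * d / (Bf * R0 + 1) < d" using p by (simp add: pos_divide_less_eq)
        then show ?thesis by simp
      qed
      finally show ?thesis .
    qed
    finally have "dist (\<phi> (z - f (z - x) *\<^sub>R ws j)) (\<phi> (z - f (z - x) *\<^sub>R w0)) < \<epsilon>"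
      using d(2)[OF in1 in2] by simp
    then show ?thesis by (simp add: dist_real_def)
  qed
  then show ?thesis by blast
qed

definition hyp_null :: "'a::euclidean_space measure \<Rightarrow> 'a set \<Rightarrow> 'a \<Rightarrow> bool" where
  "hyp_null \<nu> S x \<longleftrightarrow> (\<forall>g. affine_form g \<longrightarrow> (\<exists>y\<in>S. g y \<noteq> g x) \<longrightarrow> measure \<nu> {z. g z = g x} = 0)"

definition GEN :: "('a::euclidean_space \<Rightarrow> real) list \<Rightarrow> bool" where
  "GEN Ls \<longleftrightarrow> (\<forall>S (x::'a) \<nu>s \<nu> cs (c::real). affine S \<longrightarrow> x \<in> S \<longrightarrow> (\<forall>l\<in>set Ls. affine_form l) \<longrightarrow>
     (\<forall>j. fmb (\<nu>s j)) \<longrightarrow> fmb \<nu> \<longrightarrow> narrow_conv \<nu>s \<nu> \<longrightarrow>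
     (\<forall>j. measure (\<nu>s j) (UNIV - S) = 0) \<longrightarrow> measure \<nu> (UNIV - S) = 0 \<longrightarrow> hyp_null \<nu> S x \<longrightarrow>
     cs \<longlonglongrightarrow> c \<longrightarrow> c > 0 \<longrightarrow>
     (\<forall>j. \<exists>P. yy_adapted S Ls x P \<and> (\<forall>A\<in>P. measure (\<nu>s j) A = cs j)) \<longrightarrow>
     (\<exists>P. yy_adapted S Ls x P \<and> (\<forall>A\<in>P. measure \<nu> A = c)))"

lemma linear_cont: "linear (f :: 'a::euclidean_space \<Rightarrow> real) \<Longrightarrow> continuous_on UNIV f"
  by (simp add: linear_continuous_on linear_conv_bounded_linear)

lemma side:
  fixes x w0 :: "'a::euclidean_space" and f :: "'a \<Rightarrow> real"
  assumes IH: "GEN Ls"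
    and S: "affine S" and xS: "x \<in> S" and Ls: "\<forall>l\<in>set Ls. affine_form l"
    and l: "affine_form l" and f: "linear f" and lk: "\<And>z. l z = f z + k"
    and fs: "\<And>j. fmb (\<nu>s j)" and fn: "fmb \<nu>" and nc: "narrow_conv \<nu>s \<nu>"
    and conc: "\<And>j. measure (\<nu>s j) (UNIV - S) = 0" and conc2: "measure \<nu> (UNIV - S) = 0"
    and hn: "hyp_null \<nu> S x"
    and cs: "cs \<longlonglongrightarrow> c" and c: "c > 0" and csp: "\<And>j. cs j > 0"
    and ws: "ws \<longlonglongrightarrow> w0" and fws: "\<And>j. f (ws j) = 1" and fw0: "f w0 = 1"
    and wsS: "\<And>j. x + ws j \<in> S" and w0S: "x + w0 \<in> S" and \<sigma>: "\<sigma> = 1 \<or> \<sigma> = -1"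
    and Q: "\<And>j. yy_adapted {z\<in>S. l z = l x} Ls x (Q j)"
    and Qm: "\<And>j A. A \<in> Q j \<Longrightarrow> measure (\<nu>s j) (ray_sum A (\<sigma> *\<^sub>R ws j)) = cs j"
  shows "\<exists>P. yy_adapted {z\<in>S. l z = l x} Ls x P \<and> (\<forall>A\<in>P. measure \<nu> (ray_sum A (\<sigma> *\<^sub>R w0)) = c)"
proof -
  define F where "F = {z\<in>S. l z = l x}"
  have aF: "affine F" unfolding F_def using S l by (rule affine_level)
  have xF: "x \<in> F" unfolding F_def using xS by simp
  have fc: "continuous_on UNIV f" using f by (rule linear_cont)
  have Fc: "closed F" using aF by (rule affine_closed)
  have Fb: "F \<in> sets borel" using Fc by simp
  define H where "H = {z. \<sigma> * f (z - x) \<ge> 0}"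
  have Hb: "H \<in> sets borel" unfolding H_def
    by (intro borel_closed closed_Collect_le continuous_intros continuous_on_compose2[OF fc]) auto
  define \<pi> where "\<pi> w z = z - f (z - x) *\<^sub>R w" for w z
  have \<pi>c: "continuous_on UNIV (\<pi> w)" for w unfolding \<pi>_def
    by (intro continuous_intros continuous_on_compose2[OF fc]) auto
  have \<pi>m: "\<pi> w \<in> borel_measurable borel" for w using \<pi>c by (rule borel_measurable_continuous_onI)
  have fdiff: "f (y - x) = f y - f x" for y using f by (simp add: linear_diff)
  have FA: "\<pi> w y \<in> F" if "y \<in> S" "x + w \<in> S" "f w = 1" for y w
  proof -
    have "y + (- f (y - x)) *\<^sub>R ((x + w) - x) \<in> S" using mem_affine_3_minus[OF S that(1) that(2) xS] .
    then have "\<pi> w y \<in> S" unfolding \<pi>_def by simp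
    moreover have "f (\<pi> w y) = f x" unfolding \<pi>_def using that(3) f by (simp add: linear_diff linear_scale fdiff)
    ultimately show ?thesis unfolding F_def using lk by simp
  qed
  have FB: "f (y - x) = 0" if "y \<in> F" for y using that lk unfolding F_def by (simp add: fdiff)
  have FB2: "\<pi> w y = y" if "y \<in> F" for y w using FB[OF that] unfolding \<pi>_def by simp
  have cellsF: "A \<subseteq> F" if "yy_adapted F Ls x P" "A \<in> P" for A P
    using yy_cells_sub[OF that(1) aF Ls] that(2) by blast
  have FC: "ray_sum A (\<sigma> *\<^sub>R w) = H \<inter> \<pi> w -` A" if "A \<subseteq> F" "f w = 1" for A w
  proof -
    have "ray_sum A (\<sigma> *\<^sub>R w) = {z. \<sigma> * f (z - x) \<ge> 0 \<and> z - f (z - x) *\<^sub>R w \<in> A}"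
      using that FB by (intro ray_sum_char[OF f _ _ \<sigma>]) auto
    then show ?thesis unfolding H_def \<pi>_def by auto
  qed
  have FD: "A \<in> sets borel" if "A \<subseteq> F" "f w = 1" "H \<inter> \<pi> w -` A \<in> sets borel" for A w
  proof -
    have "A = (H \<inter> \<pi> w -` A) \<inter> F"
    proof
      show "A \<subseteq> (H \<inter> \<pi> w -` A) \<inter> F" using that(1) FB FB2 unfolding H_def by auto
      show "(H \<inter> \<pi> w -` A) \<inter> F \<subseteq> A" using FB2 by auto
    qed
    then show ?thesis using that(3) Fb by (metis sets.Int)
  qed
  define \<mu>s where "\<mu>s j = PF (\<nu>s j) H (\<pi> (ws j))" for j
  define \<mu> where "\<mu> = PF \<nu> H (\<pi> w0)"
  have \<mu>sf: "fmb (\<mu>s j)" for j unfolding \<mu>s_def using fs Hb \<pi>m by (rule PF_fmb)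
  have \<mu>f: "fmb \<mu>" unfolding \<mu>_def using fn Hb \<pi>m by (rule PF_fmb)
  have nc2: "narrow_conv \<mu>s \<mu>" unfolding narrow_conv_def
  proof (intro allI impI)
    fix \<phi> :: "'a \<Rightarrow> real" assume "continuous_on UNIV \<phi> \<and> bounded (range \<phi>)"
    then have \<phi>c: "continuous_on UNIV \<phi>" and "bounded (range \<phi>)" by auto
    then obtain M where M: "\<And>z. \<bar>\<phi> z\<bar> \<le> M" unfolding bounded_iff by (metis rangeI real_norm_def)
    have \<phi>m: "\<phi> \<in> borel_measurable borel" using \<phi>c by (rule borel_measurable_continuous_onI)
    define gs where "gs j z = indicator H z * \<phi> (\<pi> (ws j) z)" for j z
    define g where "g z = indicator H z * \<phi> (\<pi> w0 z)" for z
    have e1: "integral\<^sup>L (\<mu>s j) \<phi> = integral\<^sup>L (\<nu>s j) (gs j)" for j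
      unfolding \<mu>s_def gs_def using fs Hb \<pi>m \<phi>m by (rule PF_integral)
    have e2: "integral\<^sup>L \<mu> \<phi> = integral\<^sup>L \<nu> g"
      unfolding \<mu>_def g_def using fn Hb \<pi>m \<phi>m by (rule PF_integral)
    have gsm: "gs j \<in> borel_measurable borel" for j unfolding gs_def
      using Hb \<phi>m \<pi>m by (intro borel_measurable_times borel_measurable_indicator) (auto intro: measurable_compose)
    have gm: "g \<in> borel_measurable borel" unfolding g_def
      using Hb \<phi>m \<pi>m by (intro borel_measurable_times borel_measurable_indicator) (auto intro: measurable_compose)
    have gsb: "\<bar>gs j z\<bar> \<le> M" for j z unfolding gs_def using M[of "\<pi> (ws j) z"] M[of 0] by (auto simp: indicator_def)
    have gb: "\<bar>g z\<bar> \<le> M" for z unfolding g_def using M[of "\<pi> w0 z"] M[of 0] by (auto simp: indicator_def)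
    have lim1: "(\<lambda>j. integral\<^sup>L (\<nu>s j) (gs j) - integral\<^sup>L (\<nu>s j) g) \<longlonglongrightarrow> 0"
    proof (rule narrow_unif[OF nc fs fn gsm gm gsb gb])
      fix R \<epsilon> :: real assume e: "\<epsilon> > 0"
      obtain N where N: "\<forall>j\<ge>N. \<forall>z. dist z x \<le> R \<longrightarrow>
           \<bar>\<phi> (z - f (z - x) *\<^sub>R ws j) - \<phi> (z - f (z - x) *\<^sub>R w0)\<bar> \<le> \<epsilon>"
        using proj_unif[OF \<phi>c f ws e] by blast
      show "\<exists>N. \<forall>j\<ge>N. \<forall>z. dist z x \<le> R \<longrightarrow> \<bar>gs j z - g z\<bar> \<le> \<epsilon>"
        using N e unfolding gs_def g_def \<pi>_def by (auto simp: indicator_def)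
    qed
    have t0: "measure \<nu> {z. \<sigma> * f (z - x) = 0} = 0"
    proof -
      have "{z. \<sigma> * f (z - x) = 0} = {z. l z = l x}" using \<sigma> lk by (auto simp: fdiff)
      moreover have "l (x + w0) \<noteq> l x" using lk fw0 f by (simp add: linear_add)
      ultimately show ?thesis using hn w0S l unfolding hyp_null_def by auto
    qed
    have "(\<lambda>j. integral\<^sup>L (\<nu>s j) (\<lambda>z. indicator {z. \<sigma> * f (z - x) \<ge> 0} z * \<phi> (\<pi> w0 z)))
           \<longlonglongrightarrow> integral\<^sup>L \<nu> (\<lambda>z. indicator {z. \<sigma> * f (z - x) \<ge> 0} z * \<phi> (\<pi> w0 z))"
    proof (rule narrow_ind[OF nc fs fn _ _ _ t0])
      show "continuous_on UNIV (\<lambda>z. \<phi> (\<pi> w0 z))" using \<phi>c \<pi>c by (rule continuous_on_compose2) auto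
      show "\<bar>\<phi> (\<pi> w0 z)\<bar> \<le> M" for z using M .
      show "continuous_on UNIV (\<lambda>z. \<sigma> * f (z - x))"
        by (intro continuous_intros continuous_on_compose2[OF fc]) auto
    qed
    then have lim2: "(\<lambda>j. integral\<^sup>L (\<nu>s j) g) \<longlonglongrightarrow> integral\<^sup>L \<nu> g" unfolding g_def H_def .
    have "(\<lambda>j. (integral\<^sup>L (\<nu>s j) (gs j) - integral\<^sup>L (\<nu>s j) g) + integral\<^sup>L (\<nu>s j) g) \<longlonglongrightarrow> 0 + integral\<^sup>L \<nu> g"
      by (rule tendsto_add[OF lim1 lim2])
    then show "(\<lambda>p. integral\<^sup>L (\<mu>s p) \<phi>) \<longlonglongrightarrow> integral\<^sup>L \<mu> \<phi>" unfolding e1 e2 by simp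
  qed
  have concF: "measure (\<mu>s j) (UNIV - F) = 0" for j
  proof -
    have "measure (\<mu>s j) (UNIV - F) = measure (\<nu>s j) (H \<inter> \<pi> (ws j) -` (UNIV - F))"
      unfolding \<mu>s_def using fs Hb \<pi>m Fb by (intro PF_measure) auto
    also have "\<dots> \<le> measure (\<nu>s j) (UNIV - S)"
    proof -
      interpret finite_measure "\<nu>s j" using fs unfolding fmb_def by auto
      have "H \<inter> \<pi> (ws j) -` (UNIV - F) \<subseteq> UNIV - S" using FA wsS fws by blast
      moreover have "UNIV - S \<in> sets (\<nu>s j)" using fmb_sets[OF fs] affine_closed[OF S] by auto
      ultimately show ?thesis by (rule finite_measure_mono)
    qed
    finally show ?thesis using conc[of j] by (simp add: measure_nonneg antisym)
  qed
  have concF2: "measure \<mu> (UNIV - F) = 0"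
  proof -
    have "measure \<mu> (UNIV - F) = measure \<nu> (H \<inter> \<pi> w0 -` (UNIV - F))"
      unfolding \<mu>_def using fn Hb \<pi>m Fb by (intro PF_measure) auto
    also have "\<dots> \<le> measure \<nu> (UNIV - S)"
    proof -
      interpret finite_measure "\<nu>" using fn unfolding fmb_def by auto
      have "H \<inter> \<pi> w0 -` (UNIV - F) \<subseteq> UNIV - S" using FA w0S fw0 by blast
      moreover have "UNIV - S \<in> sets \<nu>" using fmb_sets[OF fn] affine_closed[OF S] by auto
      ultimately show ?thesis by (rule finite_measure_mono)
    qed
    finally show ?thesis using conc2 by (simp add: measure_nonneg antisym)
  qed
  have hnF: "hyp_null \<mu> F x" unfolding hyp_null_def
  proof (intro allI impI)
    fix g :: "'a \<Rightarrow> real" assume g: "affine_form g" and "\<exists>y\<in>F. g y \<noteq> g x"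
    then obtain y where y: "y \<in> F" "g y \<noteq> g x" by blast
    have gc: "continuous_on UNIV g" using g by (rule affine_form_continuous)
    have gb: "{z. g z = g x} \<in> sets borel"
      using gc by (intro borel_closed closed_Collect_eq continuous_intros) auto
    have "measure \<mu> {z. g z = g x} = measure \<nu> (H \<inter> \<pi> w0 -` {z. g z = g x})"
      unfolding \<mu>_def using fn Hb \<pi>m gb by (intro PF_measure) auto
    also have "\<dots> \<le> measure \<nu> {z. g (\<pi> w0 z) = g (\<pi> w0 x)}"
    proof -
      interpret finite_measure "\<nu>" using fn unfolding fmb_def by auto
      have "\<pi> w0 x = x" using FB2[OF xF] .
      then have "H \<inter> \<pi> w0 -` {z. g z = g x} \<subseteq> {z. g (\<pi> w0 z) = g (\<pi> w0 x)}" by auto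
      moreover have "{z. g (\<pi> w0 z) = g (\<pi> w0 x)} \<in> sets \<nu>" using fmb_sets[OF fn]
        using gc \<pi>c by (intro fmb_sets[OF fn] borel_closed closed_Collect_eq continuous_intros continuous_on_compose2[OF gc]) auto
      ultimately show ?thesis by (rule finite_measure_mono)
    qed
    also have "\<dots> = 0"
    proof -
      have ga: "affine_form (\<lambda>z. g (\<pi> w0 z))" unfolding \<pi>_def using g f by (rule affine_form_proj)
      have "y \<in> S" using y unfolding F_def by auto
      moreover have "g (\<pi> w0 y) \<noteq> g (\<pi> w0 x)" using y FB2[OF y(1)] FB2[OF xF] by simp
      ultimately show ?thesis using hn ga unfolding hyp_null_def by blast
    qed
    finally show "measure \<mu> {z. g z = g x} = 0" using measure_nonneg[of \<mu>] by (meson antisym)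
  qed
  have cellsj: "\<exists>P. yy_adapted F Ls x P \<and> (\<forall>A\<in>P. measure (\<mu>s j) A = cs j)" for j
  proof (intro exI conjI ballI)
    show "yy_adapted F Ls x (Q j)" using Q unfolding F_def .
    fix A assume A: "A \<in> Q j"
    have AF: "A \<subseteq> F" using cellsF[OF Q[of j, folded F_def] A] .
    have m: "measure (\<nu>s j) (ray_sum A (\<sigma> *\<^sub>R ws j)) = cs j" using Qm[OF A] .
    then have "ray_sum A (\<sigma> *\<^sub>R ws j) \<in> sets (\<nu>s j)" using csp[of j] measure_notin_sets by fastforce
    then have rb: "H \<inter> \<pi> (ws j) -` A \<in> sets borel" using FC[OF AF fws] fs unfolding fmb_def by simp
    have Ab: "A \<in> sets borel" using FD[OF AF fws rb] .
    have "measure (\<mu>s j) A = measure (\<nu>s j) (H \<inter> \<pi> (ws j) -` A)"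
      unfolding \<mu>s_def using fs Hb \<pi>m Ab by (rule PF_measure)
    then show "measure (\<mu>s j) A = cs j" using m FC[OF AF fws] by simp
  qed
  have "\<exists>P. yy_adapted F Ls x P \<and> (\<forall>A\<in>P. measure \<mu> A = c)"
    using IH unfolding GEN_def using aF xF Ls \<mu>sf \<mu>f nc2 concF concF2 hnF cs c cellsj by blast
  then obtain P where P: "yy_adapted F Ls x P" "\<And>A. A \<in> P \<Longrightarrow> measure \<mu> A = c" by blast
  have "measure \<nu> (ray_sum A (\<sigma> *\<^sub>R w0)) = c" if A: "A \<in> P" for A
  proof -
    have AF: "A \<subseteq> F" using cellsF[OF P(1) A] .
    have "A \<in> sets \<mu>" using P(2)[OF A] c measure_notin_sets by fastforce
    then have Ab: "A \<in> sets borel" using \<mu>f unfolding fmb_def by simp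
    have "measure \<mu> A = measure \<nu> (H \<inter> \<pi> w0 -` A)"
      unfolding \<mu>_def using fn Hb \<pi>m Ab by (rule PF_measure)
    then show ?thesis using P(2)[OF A] FC[OF AF fw0] by simp
  qed
  then show ?thesis using P(1) unfolding F_def by blast
qed

lemma narrow_subseq:
  assumes "narrow_conv \<nu>s \<nu>" "strict_mono s"
  shows "narrow_conv (\<lambda>j. \<nu>s (s j)) \<nu>"
  using assms LIMSEQ_subseq_LIMSEQ unfolding narrow_conv_def comp_def by blast

lemma yy_Nil: "yy_adapted S [] x P \<Longrightarrow> S = {x} \<and> P = {{x}}"
  by (cases rule: yy_adapted.cases) auto

lemma GEN_Nil: "GEN []"
  unfolding GEN_def
proof (intro allI impI)
  fix S and x :: 'a and \<nu>s \<nu> cs and c :: real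
  assume fs: "\<forall>j. fmb (\<nu>s j)" and fn: "fmb \<nu>" and nc: "narrow_conv \<nu>s \<nu>"
    and conc: "\<forall>j. measure (\<nu>s j) (UNIV - S) = 0" and conc2: "measure \<nu> (UNIV - S) = 0"
    and cs: "cs \<longlonglongrightarrow> c" and ex: "\<forall>j. \<exists>P. yy_adapted S [] x P \<and> (\<forall>A\<in>P. measure (\<nu>s j) A = cs j)"
  have Sx: "S = {x}" using ex yy_Nil by blast
  have mx: "measure M {x} = measure M UNIV" if "fmb M" "measure M (UNIV - {x}) = 0" for M
  proof -
    interpret finite_measure M using that unfolding fmb_def by auto
    have "measure M (UNIV - {x}) = measure M UNIV - measure M {x}"
      using fmb_sets[OF that(1)] fmb_space[OF that(1)] by (intro finite_measure_Diff) auto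
    then show ?thesis using that(2) by simp
  qed
  have csj: "cs j = measure (\<nu>s j) UNIV" for j
  proof -
    obtain P where "yy_adapted S [] x P" "\<forall>A\<in>P. measure (\<nu>s j) A = cs j" using ex by blast
    then have "measure (\<nu>s j) {x} = cs j" using yy_Nil by blast
    then show ?thesis using mx[of "\<nu>s j"] fs conc Sx by auto
  qed
  have "cs = (\<lambda>j. measure (\<nu>s j) UNIV)" using csj by auto
  then have "cs \<longlonglongrightarrow> measure \<nu> UNIV" using narrow_mass[OF nc fs[rule_format] fn] by simp
  then have "c = measure \<nu> {x}" using cs LIMSEQ_unique mx[OF fn] conc2 Sx by metis
  then show "\<exists>P. yy_adapted S [] x P \<and> (\<forall>A\<in>P. measure \<nu> A = c)"
    using Sx yy_adapted.base[of x] by blast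
qed

lemma norm_step:
  assumes yy: "yy_adapted S (l # Ls) x P" and S: "affine S" and f: "linear f" and lk: "\<And>z. l z = f z + k"
  shows "\<exists>w Q1 Qm1. x + w \<in> S \<and> f w = 1 \<and> yy_adapted {z\<in>S. l z = l x} Ls x Q1 \<and>
     yy_adapted {z\<in>S. l z = l x} Ls x Qm1 \<and> P = (\<lambda>A. ray_sum A (-w)) ` Qm1 \<union> (\<lambda>A. ray_sum A w) ` Q1"
  using yy
proof (cases rule: yy_adapted.cases)
  case (step v F P1 Pm1)
  have xS: "x \<in> S" and xvS: "x + v \<in> S" using step by auto
  have "l (x + v) \<noteq> l x" using step by blast
  then have fv: "f v \<noteq> 0" using lk f by (simp add: linear_add)
  define w where "w = (1 / f v) *\<^sub>R v"
  have "x + (1 / f v) *\<^sub>R ((x + v) - x) \<in> S" using mem_affine_3_minus[OF S xS xvS xS] .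
  then have wS: "x + w \<in> S" unfolding w_def by simp
  have fw: "f w = 1" unfolding w_def using fv f by (simp add: linear_scale)
  show ?thesis
  proof (cases "f v > 0")
    case True
    have "ray_sum A w = ray_sum A v" for A unfolding w_def using True by (intro ray_sum_scale) auto
    moreover have "ray_sum A (-w) = ray_sum A (-v)" for A
      unfolding w_def using True ray_sum_scale[of "1 / f v" A "-v"] by simp
    ultimately show ?thesis using wS fw step by (intro exI[of _ w] exI[of _ P1] exI[of _ Pm1]) auto
  next
    case False
    then have neg: "f v < 0" using fv by auto
    have "w = (- 1 / f v) *\<^sub>R (-v)" unfolding w_def by simp
    then have "ray_sum A w = ray_sum A (-v)" for A using neg ray_sum_scale[of "- 1 / f v" A "-v"] by (simp add: field_simps)
    moreover have "-w = (- 1 / f v) *\<^sub>R v" unfolding w_def by simp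
    then have "ray_sum A (-w) = ray_sum A v" for A using neg ray_sum_scale[of "- 1 / f v" A "v"] by (simp add: field_simps)
    ultimately show ?thesis using wS fw step by (intro exI[of _ w] exI[of _ Pm1] exI[of _ P1]) auto
  qed
qed

lemma GEN_Cons:
  assumes IH: "GEN Ls"
  shows "GEN (l # Ls)"
  unfolding GEN_def
proof (intro allI impI)
  fix S and x :: 'a and \<nu>s \<nu> cs and c :: real
  assume S: "affine S" and xS: "x \<in> S" and Ls0: "\<forall>l\<in>set (l # Ls). affine_form l"
    and fs0: "\<forall>j. fmb (\<nu>s j)" and fn: "fmb \<nu>" and nc: "narrow_conv \<nu>s \<nu>"
    and conc: "\<forall>j. measure (\<nu>s j) (UNIV - S) = 0" and conc2: "measure \<nu> (UNIV - S) = 0"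
    and hn: "hyp_null \<nu> S x" and cs: "cs \<longlonglongrightarrow> c" and c: "c > 0"
    and ex: "\<forall>j. \<exists>P. yy_adapted S (l # Ls) x P \<and> (\<forall>A\<in>P. measure (\<nu>s j) A = cs j)"
  have fs: "fmb (\<nu>s j)" for j using fs0 by blast
  have l: "affine_form l" and Ls: "\<forall>l\<in>set Ls. affine_form l" using Ls0 by auto
  obtain f k where f: "linear f" and lk: "\<And>z. l z = f z + k" using l affine_formE by blast
  define F where "F = {z\<in>S. l z = l x}"
  have aF: "affine F" unfolding F_def using S l by (rule affine_level)
  have fc: "continuous_on UNIV f" using f by (rule linear_cont)
  have fdiff: "f (y - x) = f y - f x" for y using f by (simp add: linear_diff)
  have "\<forall>j. \<exists>w Q1 Qm1. x + w \<in> S \<and> f w = 1 \<and> yy_adapted F Ls x Q1 \<and> yy_adapted F Ls x Qm1 \<and>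
          (\<forall>A\<in>Q1. measure (\<nu>s j) (ray_sum A w) = cs j) \<and> (\<forall>A\<in>Qm1. measure (\<nu>s j) (ray_sum A (-w)) = cs j)"
  proof
    fix j
    obtain P where P: "yy_adapted S (l # Ls) x P" "\<forall>A\<in>P. measure (\<nu>s j) A = cs j" using ex by blast
    obtain w Q1 Qm1 where "x + w \<in> S" "f w = 1" "yy_adapted F Ls x Q1" "yy_adapted F Ls x Qm1"
      "P = (\<lambda>A. ray_sum A (-w)) ` Qm1 \<union> (\<lambda>A. ray_sum A w) ` Q1"
      using norm_step[OF P(1) S f lk] unfolding F_def by blast
    then show "\<exists>w Q1 Qm1. x + w \<in> S \<and> f w = 1 \<and> yy_adapted F Ls x Q1 \<and> yy_adapted F Ls x Qm1 \<and>
          (\<forall>A\<in>Q1. measure (\<nu>s j) (ray_sum A w) = cs j) \<and> (\<forall>A\<in>Qm1. measure (\<nu>s j) (ray_sum A (-w)) = cs j)"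
      using P(2) by (intro exI[of _ w] exI[of _ Q1] exI[of _ Qm1]) auto
  qed
  then obtain w Q1 Qm1 where wS: "\<And>j. x + w j \<in> S" and fw: "\<And>j. f (w j) = 1"
    and Q1: "\<And>j. yy_adapted F Ls x (Q1 j)" and Qm1: "\<And>j. yy_adapted F Ls x (Qm1 j)"
    and Q1m: "\<And>j A. A \<in> Q1 j \<Longrightarrow> measure (\<nu>s j) (ray_sum A (w j)) = cs j"
    and Qm1m: "\<And>j A. A \<in> Qm1 j \<Longrightarrow> measure (\<nu>s j) (ray_sum A (-w j)) = cs j"
    by metis
  have cellsF: "\<forall>a\<in>A. f (a - x) = 0" if "A \<in> Q1 j" for A j
    using yy_cells_sub[OF Q1[of j] aF Ls] that lk unfolding F_def by (auto simp: fdiff)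
  have t0: "measure \<nu> {z. f (z - x) = 0} = 0"
  proof -
    have "{z. f (z - x) = 0} = {z. l z = l x}" using lk by (auto simp: fdiff)
    moreover have "l (x + w 0) \<noteq> l x" using lk fw f by (simp add: linear_add)
    ultimately show ?thesis using hn wS l unfolding hyp_null_def by auto
  qed
  have c4: "c / 4 > 0" using c by simp
  obtain \<delta> N1 where \<delta>: "\<delta> > 0" and N1: "\<forall>j\<ge>N1. measure (\<nu>s j) {z. \<bar>f (z - x)\<bar> \<le> \<delta>} < c / 4"
  proof -
    have "continuous_on UNIV (\<lambda>z. f (z - x))"
      by (intro continuous_on_compose2[OF fc] continuous_intros) auto
    then show ?thesis using narrow_near[OF nc fs fn c4, of "\<lambda>z. f (z - x)"] t0 that by blast
  qed
  obtain R N2 where N2: "\<forall>j\<ge>N2. measure (\<nu>s j) {z. R \<le> dist z x} < c / 4"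
    using narrow_tight[OF nc fs fn c4, of x] by blast
  obtain N3 where N3: "\<forall>j\<ge>N3. cs j > c / 2"
    using order_tendstoD(1)[OF cs, of "c/2"] c eventually_sequentially by auto
  have bnd: "norm (w j) \<le> R / \<delta>" if j: "j \<ge> max N1 (max N2 N3)" for j
  proof (rule ccontr)
    assume "\<not> norm (w j) \<le> R / \<delta>"
    then have big: "R / \<delta> < norm (w j)" by simp
    have wne: "w j \<noteq> 0" using fw[of j] f by (auto simp: linear_0)
    define u where "u = (1 / norm (w j)) *\<^sub>R w j"
    have nu: "norm u = 1" unfolding u_def using wne by simp
    have uw: "u \<bullet> w j = norm (w j)" unfolding u_def using wne by (simp add: dot_square_norm power2_eq_square)
    have lin: "linear (\<lambda>y. u \<bullet> y)" by (simp add: bounded_linear_inner_right bounded_linear.linear)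
    obtain A where A: "A \<in> Q1 j" "\<forall>a\<in>A. u \<bullet> (a - x) \<ge> 0" using yy_halfspace[OF Q1[of j] lin] by blast
    define C where "C = ray_sum A (w j)"
    define B1 where "B1 = {z. \<bar>f (z - x)\<bar> \<le> \<delta>}"
    define B2 where "B2 = {z. R \<le> dist z x}"
    have sub: "C \<subseteq> B1 \<union> B2"
    proof
      fix z assume "z \<in> C"
      then obtain a s where z: "z = a + s *\<^sub>R w j" "a \<in> A" "s \<ge> 0" unfolding C_def ray_sum_def by auto
      have ez: "z - x = (a - x) + s *\<^sub>R w j" using z by simp
      have "f (z - x) = f (a - x) + f (s *\<^sub>R w j)" unfolding ez by (rule linear_add[OF f])
      then have fz: "f (z - x) = s" using cellsF[OF A(1)] z(2) fw[of j] f by (simp add: linear_scale)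
      show "z \<in> B1 \<union> B2"
      proof (cases "s \<le> \<delta>")
        case True then show ?thesis using fz z(3) unfolding B1_def by auto
      next
        case False
        have "u \<bullet> (z - x) = u \<bullet> (a - x) + s * norm (w j)" unfolding ez using uw by (simp add: inner_add_right)
        also have "\<dots> \<ge> s * norm (w j)" using A(2) z(2) by simp
        finally have i1: "u \<bullet> (z - x) \<ge> s * norm (w j)" .
        have "R < \<delta> * norm (w j)" using big \<delta> by (simp add: pos_divide_less_eq mult.commute)
        also have "\<dots> \<le> s * norm (w j)" using False by (intro mult_right_mono) auto
        finally have "R < u \<bullet> (z - x)" using i1 by simp
        also have "\<dots> \<le> norm u * norm (z - x)" by (rule norm_cauchy_schwarz)
        finally have "R < dist z x" using nu by (simp add: dist_norm)
        then show ?thesis unfolding B2_def by auto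
      qed
    qed
    interpret finite_measure "\<nu>s j" using fs unfolding fmb_def by auto
    have b1: "B1 \<in> sets (\<nu>s j)" unfolding B1_def
      by (intro fmb_sets[OF fs] borel_closed closed_Collect_le continuous_intros continuous_on_compose2[OF fc]) auto
    have b2: "B2 \<in> sets (\<nu>s j)" unfolding B2_def
      by (intro fmb_sets[OF fs] borel_closed closed_Collect_le continuous_intros)
    have "cs j = measure (\<nu>s j) C" unfolding C_def using Q1m[OF A(1)] by simp
    also have "\<dots> \<le> measure (\<nu>s j) (B1 \<union> B2)" using sub b1 b2 by (intro finite_measure_mono) auto
    also have "\<dots> \<le> measure (\<nu>s j) B1 + measure (\<nu>s j) B2" using b1 b2 by (rule measure_Un_le)
    also have "\<dots> < c / 4 + c / 4" unfolding B1_def B2_def using N1 N2 j by (intro add_strict_mono) auto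
    finally show False using N3 j by auto
  qed
  define N where "N = max N1 (max N2 N3)"
  have "range w \<subseteq> w ` {..<N} \<union> cball 0 (R / \<delta>)"
  proof
    fix y assume "y \<in> range w"
    then obtain j where "y = w j" by blast
    show "y \<in> w ` {..<N} \<union> cball 0 (R / \<delta>)"
    proof (cases "j < N")
      case True then show ?thesis using \<open>y = w j\<close> by auto
    next
      case False then have "norm (w j) \<le> R / \<delta>" using bnd[of j] unfolding N_def by (simp add: not_less)
      then show ?thesis using \<open>y = w j\<close> by auto
    qed
  qed
  then have bw: "bounded (range w)" by (rule bounded_subset[rotated]) auto
  define w' where "w' j = w (j + N3)" for j
  have "bounded (range w')" using bw unfolding w'_def by (rule bounded_subset) auto
  then obtain w0 r where r: "strict_mono r" and rl: "(w' \<circ> r) \<longlonglongrightarrow> w0"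
    using bounded_imp_convergent_subsequence by blast
  define s where "s j = r j + N3" for j
  have s: "strict_mono s" using r unfolding s_def strict_mono_def by auto
  have ws: "(\<lambda>j. w (s j)) \<longlonglongrightarrow> w0" using rl unfolding s_def w'_def comp_def .
  have csp: "cs (s j) > 0" for j using N3 c unfolding s_def by (metis le_add2 half_gt_zero less_trans)
  have css: "(\<lambda>j. cs (s j)) \<longlonglongrightarrow> c" using LIMSEQ_subseq_LIMSEQ[OF cs s] by (simp add: comp_def)
  have fw0: "f w0 = 1"
  proof -
    have bl: "bounded_linear f" using f by (simp add: linear_conv_bounded_linear)
    have "(\<lambda>j. f (w (s j))) \<longlonglongrightarrow> f w0" using bounded_linear.tendsto[OF bl ws] .
    moreover have "(\<lambda>j. f (w (s j))) = (\<lambda>j. 1)" using fw by auto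
    ultimately have "(\<lambda>j. 1::real) \<longlonglongrightarrow> f w0" by simp
    then show ?thesis using LIMSEQ_unique[OF _ tendsto_const] by metis
  qed
  have w0S: "x + w0 \<in> S"
  proof -
    have lim: "(\<lambda>j. x + w (s j)) \<longlonglongrightarrow> x + w0" using ws by (intro tendsto_add tendsto_const)
    show ?thesis by (rule closed_sequentially[OF affine_closed[OF S] _ lim]) (use wS in auto)
  qed
  have nc': "narrow_conv (\<lambda>j. \<nu>s (s j)) \<nu>" using narrow_subseq[OF nc s] .
  have conc': "\<And>j. measure (\<nu>s (s j)) (UNIV - S) = 0" using conc by blast
  obtain P1 where P1: "yy_adapted F Ls x P1" "\<forall>A\<in>P1. measure \<nu> (ray_sum A (1 *\<^sub>R w0)) = c"
    using side[OF IH S xS Ls l f lk fs fn nc' conc' conc2 hn css c csp ws fw fw0 wS w0S, of 1 "\<lambda>j. Q1 (s j)"]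
      Q1 Q1m unfolding F_def by auto
  obtain Pm1 where Pm1: "yy_adapted F Ls x Pm1" "\<forall>A\<in>Pm1. measure \<nu> (ray_sum A ((-1) *\<^sub>R w0)) = c"
    using side[OF IH S xS Ls l f lk fs fn nc' conc' conc2 hn css c csp ws fw fw0 wS w0S, of "-1" "\<lambda>j. Qm1 (s j)"]
      Qm1 Qm1m unfolding F_def by auto
  define P where "P = (\<lambda>A. ray_sum A (- w0)) ` Pm1 \<union> (\<lambda>A. ray_sum A w0) ` P1"
  have "l (x + w0) \<noteq> l x" using lk fw0 f by (simp add: linear_add)
  then have "yy_adapted S (l # Ls) x P"
    using yy_adapted.step[OF xS w0S _ F_def P1(1) Pm1(1) P_def] by blast
  moreover have "\<forall>A\<in>P. measure \<nu> A = c" using P1(2) Pm1(2) unfolding P_def by auto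
  ultimately show "\<exists>P. yy_adapted S (l # Ls) x P \<and> (\<forall>A\<in>P. measure \<nu> A = c)" by blast
qed

lemma GEN_all: "GEN Ls"
  by (induction Ls) (auto intro: GEN_Nil GEN_Cons)

lemma meas_M_fmb: "meas_M \<mu> \<Longrightarrow> fmb \<mu>"
  unfolding meas_M_def fmb_def by auto

lemma meas_M_hyp:
  fixes \<mu> :: "'a::euclidean_space measure"
  assumes "meas_M \<mu>" shows "hyp_null \<mu> UNIV x"
  unfolding hyp_null_def
proof (intro allI impI)
  fix g :: "'a \<Rightarrow> real" assume g: "affine_form g" and "\<exists>y\<in>UNIV. g y \<noteq> g x"
  then obtain y where y: "g y \<noteq> g x" by blast
  obtain G k where G: "linear G" "\<And>z. g z = G z + k" using g affine_formE by blast
  define a where "a = adjoint G 1"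
  have aG: "z \<bullet> a = G z" for z unfolding a_def using adjoint_works[OF G(1), of z 1] by simp
  have aG2: "a \<bullet> z = G z" for z using aG[of z] by (simp add: inner_commute)
  have "a \<noteq> 0" using y aG G(2) by (metis inner_zero_right)
  moreover have "{z. g z = g x} = {z. a \<bullet> z = a \<bullet> x}" using aG2 G(2) by auto
  ultimately have "emeasure \<mu> {z. g z = g x} = 0" using assms unfolding meas_M_def by auto
  then show "measure \<mu> {z. g z = g x} = 0" by (simp add: measure_def)
qed

theorem lemma12:
  fixes Ls :: "('a::euclidean_space \<Rightarrow> real) list"
    and \<mu>s :: "nat \<Rightarrow> 'a measure" and \<mu> :: "'a measure" and x :: 'a
  assumes "coord_system Ls"
    and "\<And>p. meas_M (\<mu>s p)"
    and "meas_M \<mu>"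
    and "narrow_conv \<mu>s \<mu>"
    and "\<And>p. is_center (\<mu>s p) Ls x"
  shows "is_center \<mu> Ls x"
proof -
  note cs0 = assms(1) and ms = assms(2) and m = assms(3) and nc = assms(4) and ctr = assms(5)
  have fs: "fmb (\<mu>s j)" for j using ms meas_M_fmb by blast
  have fn: "fmb \<mu>" using m meas_M_fmb by blast
  have Ls: "\<forall>l\<in>set Ls. affine_form l" using cs0 unfolding coord_system_def by blast
  define c where "c = measure \<mu> UNIV / 2 ^ DIM('a)"
  define cs where "cs j = measure (\<mu>s j) UNIV / 2 ^ DIM('a)" for j
  show ?thesis
  proof (cases "measure \<mu> UNIV = 0")
    case True
    obtain P where P: "yy_adapted UNIV Ls x P" using ctr[of 0] unfolding is_center_def by blast
    have "measure \<mu> A = measure \<mu> UNIV / 2 ^ DIM('a)" for A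
    proof (cases "A \<in> sets \<mu>")
      case True
      interpret finite_measure \<mu> using fn unfolding fmb_def by auto
      have "measure \<mu> A \<le> measure \<mu> UNIV" using fmb_sets[OF fn] by (intro finite_measure_mono) auto
      then show ?thesis using \<open>measure \<mu> UNIV = 0\<close> measure_nonneg[of \<mu> A] by simp
    next
      case False then show ?thesis using \<open>measure \<mu> UNIV = 0\<close> by (simp add: measure_notin_sets)
    qed
    then show ?thesis using P unfolding is_center_def yy_equipartition_def by blast
  next
    case False
    then have "measure \<mu> UNIV > 0" using measure_nonneg[of \<mu> UNIV] by linarith
    then have c: "c > 0" unfolding c_def by simp
    have cs: "cs \<longlonglongrightarrow> c" unfolding cs_def c_def
      using narrow_mass[OF nc fs fn] by (intro tendsto_divide tendsto_const) auto
    have ex: "\<forall>j. \<exists>P. yy_adapted UNIV Ls x P \<and> (\<forall>A\<in>P. measure (\<mu>s j) A = cs j)"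
      using ctr unfolding is_center_def yy_equipartition_def cs_def by blast
    note key = GEN_all[of Ls, unfolded GEN_def, rule_format, of UNIV x \<mu>s \<mu> cs c]
    have "\<exists>P. yy_adapted UNIV Ls x P \<and> (\<forall>A\<in>P. measure \<mu> A = c)"
      by (rule key) (use Ls fs fn nc meas_M_hyp[OF m] cs c ex in auto)
    then show ?thesis unfolding is_center_def yy_equipartition_def c_def by blast
  qed
qed

end
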